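(* Fix an integer $r\ge1$. For $\ell\ge2$ with $r<2^{\ell-1}$ (so that $r<q/2$ for $q=2^\ell$), the sets $S_t(\cdot)$ defined below satisfy $$|S_0(\ell)|=3|S_0(\ell-1)|+|S_1(\ell-1)|,\quad |S_1(\ell)|=|S_0(\ell-1)|+|S_1(\ell-1)|+|S_2(\ell-1)|,\quad |S_2(\ell)|=|S_2(\ell-1)|.$$
   Context: For $\ell\ge1$, $Q=2^\ell$ and an integer $t\ge0$, $S_t(\ell)$ is the set of pairs $(a,b)$ of integers with $0\le a,b\le Q-1$ for which there exist integers $i,j\ge0$ with $i\le_2 b$, $j\le_2 b-i$ and $2i+j+a=Q-r'+tQ$ for some $r'\in\{1,\dots,r\}$. Here $u\le_2 w$ means every binary digit of $u$ is at most the corresponding binary digit of $w$. *)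

theory Defs
  imports Main
begin

definition bin_le :: "nat \<Rightarrow> nat \<Rightarrow> bool" where
  "bin_le u w \<longleftrightarrow> (\<forall>k. bit u k \<longrightarrow> bit w k)"

definition S_set :: "nat \<Rightarrow> nat \<Rightarrow> nat \<Rightarrow> (nat \<times> nat) set" where
  "S_set r t l = {(a, b). a \<le> 2^l - 1 \<and> b \<le> 2^l - 1 \<and>
     (\<exists>i j r'. bin_le i b \<and> bin_le j (b - i) \<and> r' \<in> {1..r} \<and>
        int (2*i + j + a) = int (2^l) - int r' + int t * int (2^l))}"

end

theory Submission imports Defs begin

lemma bin_le_split:
  "bin_le x y \<longleftrightarrow> bin_le (x mod 2^k) (y mod 2^k) \<and> bin_le (x div 2^k) (y div 2^k)"
proof -
  have m: "bit (z mod 2^k) n \<longleftrightarrow> n < k \<and> bit z n" for z :: nat and n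
    by (metis bit_take_bit_iff take_bit_eq_mod)
  have d: "bit (z div 2^k) n \<longleftrightarrow> bit z (k + n)" for z :: nat and n
    by (metis bit_drop_bit_eq comp_apply drop_bit_eq_div)
  show ?thesis unfolding bin_le_def m d
    by (metis le_add_diff_inverse not_less)
qed

lemma bin_le_01: "(x::nat) \<le> 1 \<Longrightarrow> y \<le> 1 \<Longrightarrow> bin_le x y \<longleftrightarrow> x \<le> y"
proof -
  assume "x \<le> 1" "y \<le> 1"
  then have "x = 0 \<or> x = 1" "y = 0 \<or> y = 1" by auto
  moreover have "bit (1::nat) 0" by (simp add: bit_0)
  ultimately show ?thesis by (auto simp: bin_le_def bit_1_iff)
qed

lemma bin_le_le: "bin_le x y \<Longrightarrow> x \<le> y"
proof (induction x arbitrary: y rule: less_induct)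
  case (less x)
  show ?case
  proof (cases "x = 0")
    case False
    from less.prems have s: "bin_le (x mod 2) (y mod 2)" "bin_le (x div 2) (y div 2)"
      using bin_le_split[of x y 1] by auto
    have "x mod 2 \<le> y mod 2" using bin_le_01 s(1) by simp
    moreover have "x div 2 \<le> y div 2" using less.IH s(2) False by simp
    ultimately show ?thesis using div_mult_mod_eq[of x 2] div_mult_mod_eq[of y 2] by linarith
  qed simp
qed

lemma bin_le_0: "bin_le 0 b" by (simp add: bin_le_def)

lemma dm: "(x0::nat) < 2^k \<Longrightarrow> (x1*2^k+x0) div 2^k = x1 \<and> (x1*2^k+x0) mod 2^k = x0"
  by simp

definition R :: "nat \<Rightarrow> nat \<Rightarrow> bool" where
  "R b w \<longleftrightarrow> (\<exists>i j. bin_le i b \<and> bin_le j (b - i) \<and> w = 2*i + j)"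

lemma R_le: "R b w \<Longrightarrow> w \<le> 2*b"
proof -
  assume "R b w"
  then obtain i j where "bin_le i b" "bin_le j (b - i)" "w = 2*i+j" unfolding R_def by blast
  then have "i \<le> b" "j \<le> b - i" "w = 2*i+j" using bin_le_le by auto
  then show ?thesis by linarith
qed

lemma R_0: "R b 0"
  unfolding R_def using bin_le_0 by auto

lemma R_split:
  assumes b0: "b0 < 2^k" and b1: "b1 \<le> 1"
  shows "R (b1*2^k + b0) w \<longleftrightarrow> (\<exists>c w0. R b0 w0 \<and> c \<le> 2*b1 \<and> w = c*2^k + w0)"
proof
  let ?Q = "2^k :: nat"
  let ?b = "b1*2^k + b0"
  assume "R ?b w"
  then obtain i j where ij: "bin_le i ?b" "bin_le j (?b - i)" "w = 2*i+j" unfolding R_def by blast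
  define i0 i1 j0 j1 where "i0 = i mod ?Q" "i1 = i div ?Q" "j0 = j mod ?Q" "j1 = j div ?Q"
  have bdm: "?b div ?Q = b1" "?b mod ?Q = b0" using b0 by simp_all
  have hi: "bin_le i0 b0" "bin_le i1 b1" using ij(1) bin_le_split[of i ?b k] bdm i0_i1_j0_j1_def by auto
  have i0le: "i0 \<le> b0" using hi bin_le_le by auto
  have blt: "?b < 2 * ?Q" using b0 b1 mult_le_mono1[of b1 1 ?Q] by linarith
  have ilt: "i < 2 * ?Q" using bin_le_le[OF ij(1)] blt by linarith
  have "i div ?Q < 2" using ilt by (metis less_mult_imp_div_less mult.commute)
  then have i1le: "i1 \<le> 1" using i0_i1_j0_j1_def by simp
  have i1le': "i1 \<le> b1" using hi(2) i1le b1 bin_le_01 by auto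
  have idec: "i = i1*?Q + i0" using i0_i1_j0_j1_def div_mult_mod_eq[of i ?Q] by simp
  have bi: "?b - i = (b1 - i1)*?Q + (b0 - i0)" using idec i0le i1le'
    by (simp add: diff_mult_distrib)
  have b0i0: "b0 - i0 < ?Q" using b0 by linarith
  have bidm: "(?b - i) div ?Q = b1 - i1" "(?b - i) mod ?Q = b0 - i0" using bi b0i0 by simp_all
  have hj: "bin_le j0 (b0 - i0)" "bin_le j1 (b1 - i1)"
    using ij(2) bin_le_split[of j "?b - i" k] bidm i0_i1_j0_j1_def by auto
  have jle: "j \<le> ?b - i" using ij(2) bin_le_le by blast
  have jlt: "j < 2 * ?Q" using jle blt by linarith
  have "j div ?Q < 2" using jlt by (metis less_mult_imp_div_less mult.commute)
  then have j1le: "j1 \<le> 1" using i0_i1_j0_j1_def by simp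
  have j1le': "j1 \<le> b1 - i1" using hj(2) j1le bin_le_01 b1 by auto
  have jdec: "j = j1*?Q + j0" using i0_i1_j0_j1_def div_mult_mod_eq[of j ?Q] by simp
  show "\<exists>c w0. R b0 w0 \<and> c \<le> 2*b1 \<and> w = c*2^k + w0"
  proof (intro exI conjI)
    show "R b0 (2*i0+j0)" unfolding R_def using hi(1) hj(1) by blast
    show "2*i1+j1 \<le> 2*b1" using j1le' i1le' by linarith
    show "w = (2*i1+j1)*2^k + (2*i0+j0)" using ij(3) idec jdec by (simp add: algebra_simps)
  qed
next
  let ?Q = "2^k :: nat"
  let ?b = "b1*2^k + b0"
  assume "\<exists>c w0. R b0 w0 \<and> c \<le> 2*b1 \<and> w = c*2^k + w0"
  then obtain c w0 i0 j0 where c: "c \<le> 2*b1" "w = c*2^k + w0" "w0 = 2*i0+j0"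
     and h: "bin_le i0 b0" "bin_le j0 (b0 - i0)" unfolding R_def by blast
  obtain i1 j1 :: nat where ij1: "c = 2*i1+j1" "i1 \<le> 1" "j1 \<le> 1" "i1 + j1 \<le> b1"
  proof -
    consider "c = 0" | "c = 1" | "c = 2" using c(1) b1 by linarith
    then show ?thesis
    proof cases
      case 1 then show ?thesis using that[of 0 0] by simp
    next
      case 2 then show ?thesis using that[of 0 1] c(1) by simp
    next
      case 3 then show ?thesis using that[of 1 0] c(1) by simp
    qed
  qed
  have i0le: "i0 \<le> b0" using h bin_le_le by auto
  have b0i0: "b0 - i0 < ?Q" using b0 by linarith
  have i0lt: "i0 < ?Q" using i0le b0 by linarith
  have j0lt: "j0 < ?Q" using h(2) bin_le_le b0i0 by (meson le_less_trans)
  define i j where "i = i1*?Q + i0" "j = j1*?Q + j0"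
  have bdm: "?b div ?Q = b1" "?b mod ?Q = b0" using b0 by simp_all
  have idm: "i div ?Q = i1" "i mod ?Q = i0" using i0lt i_j_def by simp_all
  have jdm: "j div ?Q = j1" "j mod ?Q = j0" using j0lt i_j_def by simp_all
  have bi: "?b - i = (b1 - i1)*?Q + (b0 - i0)" using i_j_def i0le ij1
    by (simp add: diff_mult_distrib)
  have bidm: "(?b - i) div ?Q = b1 - i1" "(?b - i) mod ?Q = b0 - i0" using bi b0i0 by simp_all
  have "bin_le i ?b" using bin_le_split[of i ?b k] bdm idm h(1) bin_le_01 ij1 b1 by auto
  moreover have "bin_le j (?b - i)" using bin_le_split[of j "?b - i" k] bidm jdm h(2) bin_le_01 ij1 b1 by auto
  moreover have "w = 2*i + j" using c ij1 i_j_def by (simp add: algebra_simps)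
  ultimately show "R ?b w" unfolding R_def by blast
qed

lemma bsplit: "(b::nat) < 2^Suc k \<Longrightarrow> b div 2^k \<le> 1 \<and> b mod 2^k < 2^k \<and> b = (b div 2^k)*2^k + b mod 2^k"
proof -
  assume "b < 2^Suc k"
  then have "b div 2^k < 2" by (metis less_mult_imp_div_less mult.commute power_Suc)
  then show ?thesis using div_mult_mod_eq[of b "2^k"] by simp
qed

lemma R_sub: "b < 2^k \<Longrightarrow> R b w \<Longrightarrow> 2^k \<le> w \<Longrightarrow> R b (w - 2^k)"
proof (induction k arbitrary: b w)
  case 0
  then show ?case using R_le[of b w] by simp
next
  case (Suc k)
  define b1 b0 where "b1 = b div 2^k" "b0 = b mod 2^k"
  have bs: "b1 \<le> 1" "b0 < 2^k" "b = b1*2^k + b0" using bsplit[OF Suc.prems(1)] b1_b0_def by auto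
  obtain c w0 where cw: "R b0 w0" "c \<le> 2*b1" "w = c*2^k + w0"
    using R_split[OF bs(2) bs(1)] Suc.prems(2) bs(3) by auto
  have w0le: "w0 \<le> 2*b0" using R_le cw(1) by blast
  consider "c = 0" | "c = 1" | "c = 2" using cw(2) bs(1) by linarith
  then show ?case
  proof cases
    case 1
    then show ?thesis using Suc.prems(3) cw w0le bs by simp
  next
    case 2
    then have "2^k \<le> w0" using Suc.prems(3) cw by simp
    then have "R b0 (w0 - 2^k)" using Suc.IH[OF bs(2) cw(1)] by simp
    moreover have "w - 2^Suc k = 0*2^k + (w0 - 2^k)" using 2 cw(3) \<open>2^k \<le> w0\<close> by simp
    ultimately show ?thesis using R_split[OF bs(2) bs(1)] bs(3) by (metis zero_le)
  next
    case 3
    then have "w - 2^Suc k = 0*2^k + w0" using cw(3) by simp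
    then show ?thesis using R_split[OF bs(2) bs(1)] bs(3) cw(1) by (metis zero_le)
  qed
qed

definition P :: "nat \<Rightarrow> nat \<Rightarrow> nat \<Rightarrow> nat \<Rightarrow> nat \<Rightarrow> bool" where
  "P r t k a b \<longleftrightarrow> (\<exists>w r'. R b w \<and> 1 \<le> r' \<and> r' \<le> r \<and> a + w + r' = (t+1)*2^k)"

lemma P_mono1:
  assumes "a < 2^k" "b < 2^k" "P r (Suc s) k a b" shows "P r s k a b"
proof -
  let ?Q = "2^k :: nat"
  obtain w r' where h: "R b w" "1 \<le> r'" "r' \<le> r" "a + w + r' = (s+2)*?Q"
    using assms(3) unfolding P_def by auto
  have e: "(s+2)*?Q = (s+1)*?Q + ?Q" by (simp add: algebra_simps)
  have e2: "?Q \<le> (s+1)*?Q" by simp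
  show ?thesis
  proof (cases "?Q \<le> w")
    case True
    have "R b (w - ?Q)" using R_sub assms(2) h(1) True by blast
    moreover have "a + (w - ?Q) + r' = (s+1)*?Q" using h(4) e True by linarith
    ultimately show ?thesis unfolding P_def using h(2,3) by blast
  next
    case False
    have "a + 0 + (r' + w - ?Q) = (s+1)*?Q" using h(4) e e2 False assms(1) by linarith
    moreover have "1 \<le> r' + w - ?Q" "r' + w - ?Q \<le> r" using h(4) e e2 False assms(1) h(3) by linarith+
    ultimately show ?thesis unfolding P_def using R_0 by blast
  qed
qed

lemma P_mono: "a < 2^k \<Longrightarrow> b < 2^k \<Longrightarrow> P r (s + d) k a b \<Longrightarrow> P r s k a b"
  by (induction d) (auto intro: P_mono1)

lemma P_mono': "a < 2^k \<Longrightarrow> b < 2^k \<Longrightarrow> P r s k a b \<Longrightarrow> s' \<le> s \<Longrightarrow> P r s' k a b"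
  using P_mono[of a k b r s' "s - s'"] by simp

lemma P_empty:
  assumes "a < 2^k" "b < 2^k" "r < 2^k" "P r s k a b" shows "s \<le> 2"
proof -
  let ?Q = "2^k :: nat"
  obtain w r' where h: "R b w" "1 \<le> r'" "r' \<le> r" "a + w + r' = (s+1)*?Q"
    using assms(4) unfolding P_def by auto
  have "w \<le> 2*b" using R_le h(1) .
  then have "(s+1)*?Q < 4*?Q" using h assms by linarith
  then have "s + 1 < 4" by (metis mult_less_cancel2)
  then show ?thesis by linarith
qed

lemma P_split1:
  assumes a0: "a0 < 2^k" and b0: "b0 < 2^k" and a1: "a1 \<le> 1" and b1: "b1 \<le> 1"
  shows "P r t (Suc k) (a1*2^k+a0) (b1*2^k+b0) \<longleftrightarrow>
         (\<exists>c s. c \<le> 2*b1 \<and> 2*t+1 = s + a1 + c \<and> P r s k a0 b0)"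
proof
  let ?Q = "2^k :: nat"
  assume "P r t (Suc k) (a1*2^k+a0) (b1*2^k+b0)"
  then obtain w r' where h: "R (b1*2^k+b0) w" "1 \<le> r'" "r' \<le> r"
    "a1*?Q+a0 + w + r' = (t+1)*2^Suc k" unfolding P_def by auto
  obtain c w0 where cw: "R b0 w0" "c \<le> 2*b1" "w = c*?Q + w0"
    using R_split[OF b0 b1] h(1) by auto
  define X where "X = a0 + w0 + r'"
  have X1: "1 \<le> X" using h(2) X_def by simp
  have eq: "(a1+c)*?Q + X = (2*t+2)*?Q" using h(4) cw(3) X_def by (simp add: algebra_simps)
  have lt: "a1 + c < 2*t+2"
  proof (rule ccontr)
    assume "\<not> ?thesis"
    then have "(2*t+2)*?Q \<le> (a1+c)*?Q" using mult_le_mono1 not_less by blast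
    then show False using eq X1 by linarith
  qed
  define s where "s = 2*t+1 - (a1+c)"
  have "2*t+2 = (a1+c) + (s+1)" using lt s_def by linarith
  then have "(2*t+2)*?Q = (a1+c)*?Q + (s+1)*?Q" by (metis add_mult_distrib)
  then have "X = (s+1)*?Q" using eq by linarith
  then have "P r s k a0 b0" unfolding P_def using cw(1) h(2,3) X_def by metis
  then show "\<exists>c s. c \<le> 2*b1 \<and> 2*t+1 = s + a1 + c \<and> P r s k a0 b0"
    using cw(2) lt s_def by (intro exI[of _ c] exI[of _ s]) auto
next
  let ?Q = "2^k :: nat"
  assume "\<exists>c s. c \<le> 2*b1 \<and> 2*t+1 = s + a1 + c \<and> P r s k a0 b0"
  then obtain c s w0 r' where h: "c \<le> 2*b1" "2*t+1 = s + a1 + c" "R b0 w0" "1 \<le> r'" "r' \<le> r"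
    "a0 + w0 + r' = (s+1)*?Q" unfolding P_def by auto
  have "R (b1*2^k+b0) (c*?Q + w0)" using R_split[OF b0 b1] h(1,3) by blast
  moreover have "a1*?Q+a0 + (c*?Q + w0) + r' = (t+1)*2^Suc k"
  proof -
    have "(t+1)*2^Suc k = (2*t+1+1)*?Q" by (simp add: algebra_simps)
    also have "\<dots> = (s + a1 + c + 1)*?Q" using h(2) by simp
    also have "\<dots> = a1*?Q + c*?Q + (s+1)*?Q" by (simp add: algebra_simps)
    finally show ?thesis using h(6) by linarith
  qed
  ultimately show "P r t (Suc k) (a1*2^k+a0) (b1*2^k+b0)" unfolding P_def using h(4,5) by blast
qed

lemma P_split:
  assumes a0: "a0 < 2^k" and b0: "b0 < 2^k" and a1: "a1 \<le> 1" and b1: "b1 \<le> 1"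
  shows "P r t (Suc k) (a1*2^k+a0) (b1*2^k+b0) \<longleftrightarrow> P r (2*t+1 - (a1+2*b1)) k a0 b0"
  unfolding P_split1[OF assms]
proof
  assume "\<exists>c s. c \<le> 2*b1 \<and> 2*t+1 = s + a1 + c \<and> P r s k a0 b0"
  then obtain c s where "c \<le> 2*b1" "2*t+1 = s + a1 + c" "P r s k a0 b0" by blast
  moreover have "2*t+1 - (a1+2*b1) \<le> s" using \<open>c \<le> 2*b1\<close> \<open>2*t+1 = s + a1 + c\<close> by linarith
  ultimately show "P r (2*t+1 - (a1+2*b1)) k a0 b0" using P_mono'[OF a0 b0] by blast
next
  assume "P r (2*t+1 - (a1+2*b1)) k a0 b0"
  then show "\<exists>c s. c \<le> 2*b1 \<and> 2*t+1 = s + a1 + c \<and> P r s k a0 b0"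
    using a1 by (intro exI[of _ "2*t+1 - a1 - (2*t+1 - (a1+2*b1))"] exI[of _ "2*t+1 - (a1+2*b1)"]) auto
qed

lemma int_eq_iff: "int x = int Q - int r' + int t * int Q \<longleftrightarrow> x + r' = (t+1)*Q"
proof -
  have "x + r' = (t+1)*Q \<longleftrightarrow> int (x + r') = int ((t+1)*Q)" by (rule of_nat_eq_iff[symmetric])
  also have "\<dots> \<longleftrightarrow> int x + int r' = int t * int Q + int Q" by (simp add: algebra_simps)
  finally show ?thesis by linarith
qed

lemma S_eq: "S_set r t k = {(a,b). a < 2^k \<and> b < 2^k \<and> P r t k a b}"
proof -
  have q: "a \<le> 2^k - 1 \<longleftrightarrow> a < (2::nat)^k" for a :: nat
  proof -
    have "(0::nat) < 2^k" by simp
    then show ?thesis by linarith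
  qed
  have p: "(\<exists>i j r'. bin_le i b \<and> bin_le j (b - i) \<and> r' \<in> {1..r} \<and>
        int (2*i + j + a) = int (2^k) - int r' + int t * int (2^k)) \<longleftrightarrow> P r t k a b" for a b
  proof
    assume "\<exists>i j r'. bin_le i b \<and> bin_le j (b - i) \<and> r' \<in> {1..r} \<and>
        int (2*i + j + a) = int (2^k) - int r' + int t * int (2^k)"
    then obtain i j r' where h: "bin_le i b" "bin_le j (b - i)" "r' \<in> {1..r}"
        "2*i + j + a + r' = (t+1)*2^k" unfolding int_eq_iff by blast
    have "R b (2*i+j)" unfolding R_def using h(1,2) by blast
    moreover have "a + (2*i+j) + r' = (t+1)*2^k" using h(4) by linarith
    ultimately show "P r t k a b" unfolding P_def using h(3) by auto
  next
    assume "P r t k a b"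
    then obtain w r' i j where h: "bin_le i b" "bin_le j (b - i)" "w = 2*i+j" "1 \<le> r'" "r' \<le> r"
       "a + w + r' = (t+1)*2^k" unfolding P_def R_def by blast
    have "2*i + j + a + r' = (t+1)*2^k" using h(3,6) by linarith
    then have "int (2*i + j + a) = int (2^k) - int r' + int t * int (2^k)" unfolding int_eq_iff .
    then show "\<exists>i j r'. bin_le i b \<and> bin_le j (b - i) \<and> r' \<in> {1..r} \<and>
        int (2*i + j + a) = int (2^k) - int r' + int t * int (2^k)" using h(1,2,4,5) by auto
  qed
  show ?thesis unfolding S_set_def q p by simp
qed

lemma S_finite: "finite (S_set r t k)"
  unfolding S_eq by (rule finite_subset[of _ "{..<2^k} \<times> {..<2^k}"]) auto

lemma S_empty: "r < 2^k \<Longrightarrow> 3 \<le> s \<Longrightarrow> S_set r s k = {}"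
  unfolding S_eq using P_empty by fastforce

lemma card_split:
  "card (S_set r t (Suc k)) = card (S_set r (2*t+1) k) + card (S_set r (2*t+1-2) k)
     + card (S_set r (2*t) k) + card (S_set r (2*t+1-3) k)"
proof -
  let ?Q = "2^k :: nat"
  define h where "h = (\<lambda>(a::nat,b::nat). ((a div ?Q, b div ?Q), (a mod ?Q, b mod ?Q)))"
  define I where "I = {(0::nat,0::nat),(0,1),(1,0),(1,1)}"
  define A where "A = (\<lambda>(a1::nat,b1::nat). S_set r (2*t+1 - (a1+2*b1)) k)"
  have inj: "inj_on h (S_set r t (Suc k))"
  proof -
    have dme: "x div ?Q = y div ?Q \<Longrightarrow> x mod ?Q = y mod ?Q \<Longrightarrow> x = y" for x y :: nat
      by (metis div_mult_mod_eq)
    show ?thesis unfolding h_def inj_on_def using dme by auto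
  qed
  have img: "h ` S_set r t (Suc k) = Sigma I A"
  proof
    show "h ` S_set r t (Suc k) \<subseteq> Sigma I A"
    proof
      fix x assume "x \<in> h ` S_set r t (Suc k)"
      then obtain a b where ab: "(a,b) \<in> S_set r t (Suc k)" "x = h (a,b)" by auto
      then have abl: "a < 2^Suc k" "b < 2^Suc k" "P r t (Suc k) a b" unfolding S_eq by auto
      note sa = bsplit[OF abl(1)] and sb = bsplit[OF abl(2)]
      have "P r (2*t+1 - (a div ?Q + 2*(b div ?Q))) k (a mod ?Q) (b mod ?Q)"
        using P_split[of "a mod ?Q" k "b mod ?Q" "a div ?Q" "b div ?Q" r t] sa sb abl(3) by simp
      moreover have "(a div ?Q, b div ?Q) \<in> I" using sa sb I_def by auto
      ultimately show "x \<in> Sigma I A" using ab(2) sa sb unfolding h_def A_def S_eq by auto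
    qed
  next
    show "Sigma I A \<subseteq> h ` S_set r t (Suc k)"
    proof
      fix x assume "x \<in> Sigma I A"
      then obtain a1 b1 a0 b0 where x: "x = ((a1,b1),(a0,b0))" "(a1,b1) \<in> I" "(a0,b0) \<in> A (a1,b1)"
        by auto
      have l: "a1 \<le> 1" "b1 \<le> 1" using x(2) I_def by auto
      have r: "a0 < ?Q" "b0 < ?Q" "P r (2*t+1 - (a1+2*b1)) k a0 b0" using x(3) unfolding A_def S_eq by auto
      have "P r t (Suc k) (a1*?Q+a0) (b1*?Q+b0)" using P_split[OF r(1,2) l] r(3) by simp
      moreover have "a1*?Q+a0 < 2^Suc k" "b1*?Q+b0 < 2^Suc k"
      proof -
        have "a1*?Q \<le> ?Q" "b1*?Q \<le> ?Q" using l mult_le_mono1[of a1 1 ?Q] mult_le_mono1[of b1 1 ?Q] by auto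
        moreover have "2^Suc k = 2*?Q" by simp
        ultimately show "a1*?Q+a0 < 2^Suc k" "b1*?Q+b0 < 2^Suc k" using r(1,2) by linarith+
      qed
      ultimately have "(a1*?Q+a0, b1*?Q+b0) \<in> S_set r t (Suc k)" unfolding S_eq by auto
      moreover have "h (a1*?Q+a0, b1*?Q+b0) = x" using x(1) r unfolding h_def by simp
      ultimately show "x \<in> h ` S_set r t (Suc k)" by (metis image_eqI)
    qed
  qed
  have "card (S_set r t (Suc k)) = card (Sigma I A)" using card_image[OF inj] img by simp
  also have "\<dots> = (\<Sum>i\<in>I. card (A i))"
    by (rule card_SigmaI) (auto simp: I_def A_def S_finite)
  also have "\<dots> = card (S_set r (2*t+1) k) + card (S_set r (2*t+1-2) k)
     + card (S_set r (2*t) k) + card (S_set r (2*t+1-3) k)"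
    unfolding I_def A_def by simp
  finally show ?thesis .
qed

theorem mainTheorem7:
  fixes r l :: nat
  assumes "r \<ge> 1" and "l \<ge> 2" and "r < 2^(l-1)"
  shows "card (S_set r 0 l) = 3 * card (S_set r 0 (l-1)) + card (S_set r 1 (l-1))
       \<and> card (S_set r 1 l) = card (S_set r 0 (l-1)) + card (S_set r 1 (l-1)) + card (S_set r 2 (l-1))
       \<and> card (S_set r 2 l) = card (S_set r 2 (l-1))"
proof -
  obtain k where k: "l = Suc k" using assms(2) by (cases l) auto
  have rk: "r < 2^k" using assms(3) k by simp
  have e: "\<And>s. 3 \<le> s \<Longrightarrow> card (S_set r s k) = 0" using S_empty[OF rk] by simp
  have c0: "card (S_set r 0 (Suc k)) = card (S_set r 1 k) + card (S_set r 0 k) + card (S_set r 0 k) + card (S_set r 0 k)"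
    using card_split[of r 0 k] by simp
  have c1: "card (S_set r 1 (Suc k)) = card (S_set r 3 k) + card (S_set r 1 k) + card (S_set r 2 k) + card (S_set r 0 k)"
    using card_split[of r 1 k] by (simp add: numeral_eq_Suc)
  have c2: "card (S_set r 2 (Suc k)) = card (S_set r 5 k) + card (S_set r 3 k) + card (S_set r 4 k) + card (S_set r 2 k)"
    using card_split[of r 2 k] by (simp add: numeral_eq_Suc)
  show ?thesis using c0 c1 c2 e[of 3] e[of 4] e[of 5] k by simp
qed

end
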